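(* Let $b\ge 2$ and $m\ge 0$ be integers. Consider the following nondeterministic procedure. Set $\mathcal U_1=[0,1)^2$. For $n=1,2,\ldots$: if $\mathcal U_n=\emptyset$, stop; otherwise choose an arbitrary box $X_n=\prod_{j=1}^2\left[\frac{u_j(n)}{b^m},\frac{u_j(n)+1}{b^m}\right)\subseteq \mathcal U_n$ with $u_j(n)\in\{0,1,\ldots,b^m-1\}$, and set $\mathcal U_{n+1}=\mathcal U_n\setminus\bigcup_{E\in\mathcal E_m(X_n)}E$. Then, regardless of the choices made, the procedure stops after at most $b^m$ boxes have been chosen.
   Context: An elementary $b$-adic interval in $[0,1)^s$ is a set $\prod_{j=1}^s\left[\frac{a_j}{b^{d_j}},\frac{a_j+1}{b^{d_j}}\right)$ with $d_j\in\mathbb N_0$ and $a_j\in\{0,1,\ldots,b^{d_j}-1\}$; its volume is $b^{-(d_1+\cdots+d_s)}$. For a box $X=\prod_{j=1}^s\left[\frac{u_j}{b^m},\frac{u_j+1}{b^m}\right)$, $\mathcal E_m(X)$ denotes the set of all elementary $b$-adic intervals of volume $b^{-m}$ that contain $X$ as a subset. *)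

theory Defs
  imports Complex_Main
begin

definition elem_int2 :: "nat \<Rightarrow> nat \<Rightarrow> nat \<Rightarrow> nat \<Rightarrow> nat \<Rightarrow> (real \<times> real) set" where
  "elem_int2 b d1 d2 a1 a2 =
     {real a1 / real b ^ d1 ..< (real a1 + 1) / real b ^ d1} \<times>
     {real a2 / real b ^ d2 ..< (real a2 + 1) / real b ^ d2}"

definition grid_box :: "nat \<Rightarrow> nat \<Rightarrow> nat \<times> nat \<Rightarrow> (real \<times> real) set" where
  "grid_box b m u = elem_int2 b m m (fst u) (snd u)"

text \<open>E_m(X): all elementary b-adic intervals of volume b^(-m) containing X
  (volume b^(-(d1+d2)) = b^(-m) means d1 + d2 = m since b >= 2).\<close>
definition E_m :: "nat \<Rightarrow> nat \<Rightarrow> (real \<times> real) set \<Rightarrow> (real \<times> real) set set" where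
  "E_m b m X = {E. \<exists>d1 d2 a1 a2. a1 < b ^ d1 \<and> a2 < b ^ d2 \<and> d1 + d2 = m \<and>
                   E = elem_int2 b d1 d2 a1 a2 \<and> X \<subseteq> E}"

text \<open>U_set b m u k is the paper's U_(k+1), given the choices u 1, u 2, ...:
  U_1 = [0,1)^2, U_(n+1) = U_n minus the union of E_m(X_n).\<close>
fun U_set :: "nat \<Rightarrow> nat \<Rightarrow> (nat \<Rightarrow> nat \<times> nat) \<Rightarrow> nat \<Rightarrow> (real \<times> real) set" where
  "U_set b m u 0 = {0..<1} \<times> {0..<1}"
| "U_set b m u (Suc n) = U_set b m u n - \<Union> (E_m b m (grid_box b m (u (Suc n))))"

end

theory Submission
  imports Defs
begin

lemma U_mono: "n \<le> n' \<Longrightarrow> U_set b m u n' \<subseteq> U_set b m u n"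
  by (induction n' rule: dec_induct) auto

lemma pt_in_box:
  assumes "b \<ge> 2"
  shows "(real (fst v) / real b ^ m, real (snd v) / real b ^ m) \<in> grid_box b m v"
  using assms by (auto simp: grid_box_def elem_int2_def divide_strict_right_mono)

lemma E_in:
  assumes "b \<ge> 2" "fst v < b ^ m" "snd v < b ^ m"
  shows "elem_int2 b m 0 (fst v) 0 \<in> E_m b m (grid_box b m v)"
proof -
  have bp: "real b ^ m > 0" using assms by simp
  have "real (snd v) + 1 \<le> real b ^ m"
    using assms(3) by (metis of_nat_less_iff of_nat_power Suc_leI of_nat_Suc of_nat_le_iff add.commute)
  hence le1: "(real (snd v) + 1) / real b ^ m \<le> 1" using bp by simp
  have z: "real (snd v) / real b ^ m \<ge> 0" by simp
  have "grid_box b m v \<subseteq> elem_int2 b m 0 (fst v) 0"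
  proof
    fix x assume "x \<in> grid_box b m v"
    then obtain a c where x: "x = (a, c)" "real (fst v) / real b ^ m \<le> a" "a < (real (fst v) + 1) / real b ^ m"
      "real (snd v) / real b ^ m \<le> c" "c < (real (snd v) + 1) / real b ^ m"
      unfolding grid_box_def elem_int2_def by auto
    have "0 \<le> c" using x(4) z by linarith
    moreover have "c < 1" using x(5) calculation \<open>(real (snd v) + 1) / real b ^ m \<le> 1\<close> by linarith
    ultimately show "x \<in> elem_int2 b m 0 (fst v) 0" using x unfolding elem_int2_def by auto
  qed
  moreover have "fst v < b ^ m \<and> (0::nat) < b ^ 0 \<and> m + 0 = m" using assms by simp
  ultimately show ?thesis unfolding E_m_def by blast
qed

theorem mainTheorem2:
  fixes b m N :: nat and u :: "nat \<Rightarrow> nat \<times> nat"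
  assumes "b \<ge> 2"
    and "\<forall>n \<in> {1..N}. fst (u n) < b ^ m \<and> snd (u n) < b ^ m \<and>
                        grid_box b m (u n) \<subseteq> U_set b m u (n - 1)"
  shows "N \<le> b ^ m"
proof -
  have key: "fst (u n) \<noteq> fst (u n')" if "1 \<le> n" "n < n'" "n' \<le> N" for n n'
  proof
    assume eq: "fst (u n) = fst (u n')"
    let ?p = "(real (fst (u n')) / real b ^ m, real (snd (u n')) / real b ^ m)"
    have h1: "fst (u n) < b ^ m" "snd (u n) < b ^ m" using assms(2) that by auto
    have "?p \<in> grid_box b m (u n')" by (rule pt_in_box[OF assms(1)])
    also have "\<dots> \<subseteq> U_set b m u (n' - 1)" using assms(2) that by auto
    also have "\<dots> \<subseteq> U_set b m u (Suc (n - 1))" by (rule U_mono) (use that in auto)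
    finally have pin: "?p \<in> U_set b m u (Suc (n - 1))" .
    have "Suc (n - 1) = n" using that by simp
    hence notin: "?p \<notin> \<Union> (E_m b m (grid_box b m (u n)))" using pin by (metis Diff_iff U_set.simps(2))
    have h2: "fst (u n') < b ^ m" "snd (u n') < b ^ m" using assms(2) that by auto
    moreover have "?p \<in> elem_int2 b m 0 (fst (u n)) 0"
      using pt_in_box[OF assms(1), where m=m and v="u n'"] eq E_in[OF assms(1) h2]
      unfolding E_m_def by auto
    ultimately show False using E_in[OF assms(1) h1] notin by blast
  qed
  have "inj_on (\<lambda>n. fst (u n)) {1..N}"
    unfolding inj_on_def
    by (metis atLeastAtMost_iff key linorder_neqE_nat)
  moreover have "(\<lambda>n. fst (u n)) ` {1..N} \<subseteq> {..<b ^ m}" using assms(2) by auto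
  ultimately have "card {1..N} \<le> card {..<b ^ m}" by (intro card_inj_on_le) auto
  thus ?thesis by simp
qed

end
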